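(* Let $G$ be a finite group, $H$ a subgroup of $G$, $\phi: H \to \{\pm 1\}$ a homomorphism, and $c \in G$. Then the equality $\phi(c^{-1}hc) = \phi(h)$ holds for at least half of the elements $h \in H \cap cHc^{-1}$.
   Context: For $h \in H \cap cHc^{-1}$ one has $c^{-1}hc \in H$, so $\phi(c^{-1}hc)$ is defined. *)

theory Defs
  imports "HOL-Algebra.Algebra"
begin

end

theory Submission
  imports Defs
begin

theorem lemma1:
  fixes G (structure) and H :: "'a set" and \<phi> :: "'a \<Rightarrow> int" and c :: 'a
  assumes "group G" and "finite (carrier G)" and "subgroup H G"
    and "\<forall>h\<in>H. \<phi> h \<in> {1, -1}"
    and "\<forall>x\<in>H. \<forall>y\<in>H. \<phi> (x \<otimes> y) = \<phi> x * \<phi> y"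
    and "c \<in> carrier G"
  shows "2 * card {h \<in> H \<inter> {c \<otimes> k \<otimes> inv c | k. k \<in> H}. \<phi> (inv c \<otimes> h \<otimes> c) = \<phi> h}
           \<ge> card (H \<inter> {c \<otimes> k \<otimes> inv c | k. k \<in> H})"
proof -
  interpret group G by fact
  interpret subgroup H G by fact
  note pm = assms(4) and hom = assms(5) and cG = assms(6)
  define K where "K = H \<inter> {c \<otimes> k \<otimes> inv c | k. k \<in> H}"
  define S where "S = {h \<in> K. \<phi> (inv c \<otimes> h \<otimes> c) = \<phi> h}"
  have HG: "H \<subseteq> carrier G" by (rule subset)
  have canc[simp]: "inv c \<otimes> (c \<otimes> z) = z" "c \<otimes> (inv c \<otimes> z) = z" if "z \<in> carrier G" for z
    using that cG by (simp_all flip: m_assoc)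
  have finK: "finite K" unfolding K_def using assms(2) HG finite_subset by blast
  have conjK: "inv c \<otimes> h \<otimes> c \<in> H" if "h \<in> K" for h
  proof -
    from that obtain k where k: "k \<in> H" "h = c \<otimes> k \<otimes> inv c" unfolding K_def by blast
    have "k \<in> carrier G" using k HG by blast
    then have "inv c \<otimes> h \<otimes> c = k" using k cG
      by (simp add: m_assoc)
    then show ?thesis using k by simp
  qed
  have mulK: "a \<otimes> b \<in> K" if "a \<in> K" "b \<in> K" for a b
  proof -
    from that obtain x y where xy: "x \<in> H" "y \<in> H" "a = c \<otimes> x \<otimes> inv c" "b = c \<otimes> y \<otimes> inv c"
      unfolding K_def by blast
    have xG: "x \<in> carrier G" and yG: "y \<in> carrier G" using xy HG by auto
    have "a \<otimes> b = c \<otimes> (x \<otimes> y) \<otimes> inv c" using xy xG yG cG by (simp add: m_assoc)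
    moreover have "a \<otimes> b \<in> H" using that unfolding K_def by auto
    ultimately show ?thesis unfolding K_def using xy by auto
  qed
  have conjmul: "inv c \<otimes> (a \<otimes> b) \<otimes> c = (inv c \<otimes> a \<otimes> c) \<otimes> (inv c \<otimes> b \<otimes> c)"
    if "a \<in> carrier G" "b \<in> carrier G" for a b
    using that cG by (simp add: m_assoc)
  show ?thesis
  proof (cases "K - S = {}")
    case True
    then have "S = K" unfolding S_def by blast
    then show ?thesis unfolding S_def K_def by simp
  next
    case False
    then obtain k0 where k0: "k0 \<in> K" "\<phi> (inv c \<otimes> k0 \<otimes> c) \<noteq> \<phi> k0" unfolding S_def by blast
    have k0G: "k0 \<in> carrier G" using k0 HG unfolding K_def by blast
    have inj: "inj_on (\<lambda>h. k0 \<otimes> h) (K - S)"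
      by (rule inj_onI) (use k0G HG in \<open>auto simp: K_def\<close>)
    have img: "(\<lambda>h. k0 \<otimes> h) ` (K - S) \<subseteq> S"
    proof
      fix y assume "y \<in> (\<lambda>h. k0 \<otimes> h) ` (K - S)"
      then obtain h where h: "h \<in> K" "h \<notin> S" "y = k0 \<otimes> h" by blast
      have hG: "h \<in> carrier G" using h HG unfolding K_def by blast
      have hne: "\<phi> (inv c \<otimes> h \<otimes> c) \<noteq> \<phi> h" using h unfolding S_def by blast
      have hH: "h \<in> H" and k0H: "k0 \<in> H" using h k0 unfolding K_def by auto
      have "\<phi> (inv c \<otimes> y \<otimes> c) = \<phi> (inv c \<otimes> k0 \<otimes> c) * \<phi> (inv c \<otimes> h \<otimes> c)"
        using h conjmul[OF k0G hG] hom conjK[OF k0(1)] conjK[OF h(1)] by simp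
      also have "\<dots> = \<phi> k0 * \<phi> h"
      proof -
        have "\<phi> (inv c \<otimes> k0 \<otimes> c) \<in> {1,-1}" "\<phi> (inv c \<otimes> h \<otimes> c) \<in> {1,-1}"
          "\<phi> k0 \<in> {1,-1}" "\<phi> h \<in> {1,-1}"
          using pm conjK[OF k0(1)] conjK[OF h(1)] hH k0H by auto
        then show ?thesis using k0(2) hne by auto
      qed
      also have "\<dots> = \<phi> y" using hom hH k0H h by simp
      finally show "y \<in> S" unfolding S_def using mulK[OF k0(1) h(1)] h by simp
    qed
    have "card (K - S) \<le> card S"
      using card_inj_on_le[OF inj img] finK S_def by (simp add: S_def)
    moreover have "card K = card S + card (K - S)"
    proof -
      have "S \<subseteq> K" unfolding S_def by blast
      then show ?thesis using finK card_Diff_subset[of S K] card_mono[of K S] finite_subset by fastforce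
    qed
    ultimately show ?thesis unfolding S_def K_def by simp
  qed
qed

end
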